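(* Let $\tilde f$ satisfy (H1), (H2) and (H3). For every real $M>0$ there exists $n_0\in\mathbb{N}$ such that for every compact set $\tilde K\subset\tilde A_0$ with $\mathrm{diam}\,p_1(\tilde K)\le M$ and every integer $n$ with $|n|\ge n_0$, we have $\tilde f^n(\tilde K)\cap\tilde K=\emptyset$.
   Context: Let $\tilde f$ be a homeomorphism of $\mathbb{R}^2$ isotopic to the identity and commuting with $T(x,y)=(x+1,y)$; $p_1$ is the first coordinate projection. For a horizontal line $\Gamma$, $U^+_\Gamma$ and $U^-_\Gamma$ denote the open half-planes above and below $\Gamma$. Hypotheses: (H1) $\Gamma_0,\Gamma_1,\Gamma_2$ are horizontal lines with $\Gamma_0\subset U^+_{\Gamma_1}$, $\Gamma_1\subset U^+_{\Gamma_2}$, and $\tilde f(\Gamma_j)\subset U^-_{\Gamma_j}$ for $j=0,1,2$; (H2) $\tilde f^n(\Gamma_0)\cap\Gamma_2\ne\emptyset$ for every integer $n\ge1$; (H3) for $i\in\{0,1\}$, letting $\tilde A_i$ be the closed band between $\Gamma_i$ and $\Gamma_{i+1}$, the sets $\Theta(\tilde A_0),\Theta(\tilde A_1)$ are non-empty and $\rho_{\Theta(\tilde A_0)}(\tilde f)\subset(0,+\infty)$, $\rho_{\Theta(\tilde A_1)}(\tilde f)\subset(-\infty,0)$. Here $\Theta(\tilde E)=\{x\in\tilde E:\tilde f^n(x)\in\tilde E\ \forall n\in\mathbb{Z}\}$, and for a closed $T$-invariant set $\tilde E$ contained in a horizontal band, $\rho_{\tilde E}(\tilde f)=\bigcap_{m\ge1}\mathrm{Cl}\big(\bigcup_{n\ge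 m}\{\frac1n(p_1(\tilde f^n(\tilde z))-p_1(\tilde z)): \tilde z\in\tilde E,\ \tilde f^n(\tilde z)\in\tilde E\}\big)$, closure in $\overline{\mathbb{R}}=\mathbb{R}\cup\{\pm\infty\}$. *)

theory Defs
  imports "HOL-Analysis.Analysis" "HOL-Library.Extended_Real"
begin

type_synonym pt = "real \<times> real"

definition isotopic_to_id :: "(pt \<Rightarrow> pt) \<Rightarrow> bool" where
  "isotopic_to_id f \<longleftrightarrow>
     (\<exists>H :: real \<times> pt \<Rightarrow> pt.
        continuous_on ({0..1} \<times> UNIV) H \<and>
        (\<forall>t\<in>{0..1}. \<exists>g. homeomorphism UNIV UNIV (\<lambda>z. H (t, z)) g) \<and>
        (\<forall>z. H (0, z) = z) \<and> (\<forall>z. H (1, z) = f z))"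

definition ipow :: "(pt \<Rightarrow> pt) \<Rightarrow> (pt \<Rightarrow> pt) \<Rightarrow> int \<Rightarrow> pt \<Rightarrow> pt" where
  "ipow f g n = (if 0 \<le> n then f ^^ nat n else g ^^ nat (- n))"

definition hline :: "real \<Rightarrow> pt set" where
  "hline c = {z. snd z = c}"

definition upper :: "real \<Rightarrow> pt set" where
  "upper c = {z. snd z > c}"

definition lower :: "real \<Rightarrow> pt set" where
  "lower c = {z. snd z < c}"

definition band :: "real \<Rightarrow> real \<Rightarrow> pt set" where
  "band a b = {z. min a b \<le> snd z \<and> snd z \<le> max a b}"

definition Theta :: "(pt \<Rightarrow> pt) \<Rightarrow> (pt \<Rightarrow> pt) \<Rightarrow> pt set \<Rightarrow> pt set" where
  "Theta f g E = {z \<in> E. \<forall>n::int. ipow f g n z \<in> E}"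

definition rot_set :: "(pt \<Rightarrow> pt) \<Rightarrow> (pt \<Rightarrow> pt) \<Rightarrow> pt set \<Rightarrow> ereal set" where
  "rot_set f g E = (\<Inter>m\<in>{1::nat..}. closure (\<Union>n\<in>{m..}.
      {ereal ((fst ((f ^^ n) z) - fst z) / real n) | z. z \<in> E \<and> (f ^^ n) z \<in> E}))"

end

theory Submission
  imports Defs
begin

definition sh :: "real \<Rightarrow> pt \<Rightarrow> pt" where "sh k z = (fst z + k, snd z)"

lemma periodic_bounded:
  fixes h :: "pt \<Rightarrow> real"
  assumes hc: "continuous_on UNIV h" and hp: "\<And>k z. h (sh (real_of_int k) z) = h z"
  shows "\<exists>C. \<forall>z \<in> band a b. \<bar>h z\<bar> \<le> C"
proof -
  define S where "S = {0..1::real} \<times> {min a b..max a b}"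
  have "compact S" unfolding S_def by (intro compact_Times) auto
  then have "compact (h ` S)" using hc by (meson compact_continuous_image continuous_on_subset subset_UNIV)
  then obtain C where C: "\<forall>x\<in>h ` S. \<bar>x\<bar> \<le> C"
    using compact_imp_bounded bounded_real by metis
  show ?thesis
  proof (intro exI ballI)
    fix z assume z: "z \<in> band a b"
    define k where "k = - floor (fst z)"
    have "sh (real_of_int k) z \<in> S"
      using z unfolding S_def band_def sh_def k_def
      by (auto simp: mem_Times_iff) linarith
    then have "\<bar>h (sh (real_of_int k) z)\<bar> \<le> C" using C by blast
    then show "\<bar>h z\<bar> \<le> C" by (simp add: hp)
  qed
qed

locale setting =
  fixes f g :: "pt \<Rightarrow> pt" and c0 c1 :: real
  assumes homeo: "homeomorphism UNIV UNIV f g"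
    and commT: "\<And>x y. f (x + 1, y) = (fst (f (x, y)) + 1, snd (f (x, y)))"
    and c01: "c1 < c0"
    and L0: "f ` hline c0 \<subseteq> lower c0" and L1: "f ` hline c1 \<subseteq> lower c1"
    and Th: "Theta f g (band c0 c1) \<noteq> {}"
    and rot: "rot_set f g (Theta f g (band c0 c1)) \<subseteq> {0<..<\<infinity>}"
begin

lemma gf[simp]: "g (f x) = x" and fg[simp]: "f (g x) = x"
  using homeo by (metis UNIV_I homeomorphism_def)+

lemma contf: "continuous_on UNIV f" and contg: "continuous_on UNIV g"
  using homeo by (auto simp: homeomorphism_def)

lemma f_sh_nat: "f (sh (real n) z) = sh (real n) (f z)"
proof (induction n arbitrary: z)
  case 0 then show ?case by (simp add: sh_def)
next
  case (Suc n)
  have "sh (real (Suc n)) z = (fst (sh (real n) z) + 1, snd (sh (real n) z))"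
    by (simp add: sh_def)
  then have "f (sh (real (Suc n)) z) = (fst (f (sh (real n) z)) + 1, snd (f (sh (real n) z)))"
    using commT by simp
  then show ?case using Suc by (simp add: sh_def)
qed

lemma sh_add: "sh a (sh b z) = sh (a + b) z" and sh0[simp]: "sh 0 z = z"
  by (auto simp: sh_def)

lemma f_sh: "f (sh (real_of_int k) z) = sh (real_of_int k) (f z)"
proof (cases "k \<ge> 0")
  case True
  then show ?thesis using f_sh_nat[of "nat k" z] by simp
next
  case False
  define m where "m = nat (-k)"
  have k: "real_of_int k = - real m" using False by (simp add: m_def)
  have "f z = f (sh (real m) (sh (- real m) z))" by (simp add: sh_add)
  also have "\<dots> = sh (real m) (f (sh (- real m) z))" by (rule f_sh_nat)
  finally have "sh (- real m) (f z) = f (sh (- real m) z)" by (simp add: sh_add)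
  then show ?thesis by (simp add: k)
qed

lemma g_sh: "g (sh (real_of_int k) z) = sh (real_of_int k) (g z)"
proof -
  have "f (sh (real_of_int k) (g z)) = sh (real_of_int k) z" by (simp add: f_sh)
  then show ?thesis by (metis gf)
qed

lemma fpow_sh: "(f ^^ n) (sh (real_of_int k) z) = sh (real_of_int k) ((f ^^ n) z)"
  by (induction n) (auto simp: f_sh)

lemma gpow_sh: "(g ^^ n) (sh (real_of_int k) z) = sh (real_of_int k) ((g ^^ n) z)"
  by (induction n) (auto simp: g_sh)

lemma ipow_sh: "ipow f g n (sh (real_of_int k) z) = sh (real_of_int k) (ipow f g n z)"
  by (simp add: ipow_def fpow_sh gpow_sh)

lemma cont_fpow: "continuous_on UNIV (f ^^ n)"
proof (induction n)
  case 0 then show ?case by (simp add: id_def)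
next
  case (Suc n)
  then show ?case using contf
    by (simp only: funpow.simps) (metis continuous_on_compose continuous_on_subset subset_UNIV)
qed

lemma cont_gpow: "continuous_on UNIV (g ^^ n)"
proof (induction n)
  case 0 then show ?case by (simp add: id_def)
next
  case (Suc n)
  then show ?case using contg
    by (simp only: funpow.simps) (metis continuous_on_compose continuous_on_subset subset_UNIV)
qed

lemma cont_ipow: "continuous_on UNIV (ipow f g n)"
  by (simp add: ipow_def cont_fpow cont_gpow)

lemma fg_pow: "(f ^^ n) ((g ^^ n) z) = z"
proof (induction n arbitrary: z)
  case (Suc n)
  have "(f ^^ Suc n) ((g ^^ Suc n) z) = (f ^^ n) (f (g ((g ^^ n) z)))"
    by (simp only: funpow_Suc_right[of n f] funpow.simps(2)[of n g] o_def)
  then show ?case using Suc by simp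
qed simp

lemma ipow_succ: "ipow f g (i + 1) x = f (ipow f g i x)"
proof -
  consider "i \<ge> 0" | "i = -1" | "i \<le> -2" by linarith
  then show ?thesis
  proof cases
    case 1
    then show ?thesis by (simp add: ipow_def nat_add_distrib)
  next
    case 2
    then show ?thesis by (simp add: ipow_def)
  next
    case 3
    then have e: "nat (-i) = Suc (nat (- (i + 1)))" by simp
    show ?thesis using 3 by (simp add: ipow_def e)
  qed
qed

lemma ipow_pred: "ipow f g (i - 1) x = g (ipow f g i x)"
  using ipow_succ[of "i - 1" x] by (metis diff_add_cancel gf)

lemma ipow_fpow: "ipow f g j ((f ^^ n) w) = ipow f g (j + int n) w"
proof (induction j rule: int_induct[where k = 0])
  case base
  then show ?case by (simp add: ipow_def)
next
  case (step1 i)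
  then show ?case using ipow_succ[of i] ipow_succ[of "i + int n"] by (simp add: algebra_simps)
next
  case (step2 i)
  then show ?case using ipow_pred[of i] ipow_pred[of "i + int n"] by (simp add: algebra_simps)
qed

lemma ipow_nat: "ipow f g (int n) = f ^^ n"
  by (simp add: ipow_def)

lemma Theta_inv: "w \<in> Theta f g E \<Longrightarrow> (f ^^ n) w \<in> Theta f g E"
proof -
  assume w: "w \<in> Theta f g E"
  have "ipow f g j ((f ^^ n) w) \<in> E" for j
    using w ipow_fpow[of j n w] by (simp add: Theta_def)
  moreover have "(f ^^ n) w \<in> E"
    using w ipow_nat[of n] by (simp add: Theta_def) (metis)
  ultimately show ?thesis by (simp add: Theta_def)
qed

lemma dich:
  assumes Lc: "f ` hline c \<subseteq> lower c"
  shows "(\<forall>z. snd z \<le> c \<longrightarrow> snd (f z) < c) \<or> (\<forall>u. snd u \<ge> c \<longrightarrow> snd (g u) < c)"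
proof -
  define U where "U = {z::pt. snd z \<ge> c}"
  have openf: "open (f ` A)" if "open A" for A
  proof -
    have "x \<in> f ` A \<longleftrightarrow> g x \<in> A" for x by (metis fg gf image_iff)
    then have "f ` A = g -` A" by auto
    then show ?thesis using contg that continuous_on_open_vimage[of UNIV g] by auto
  qed
  have cU: "connected U" unfolding U_def
  proof (rule convex_connected, clarsimp simp: convex_def)
    fix b ba u v :: real assume h: "c \<le> b" "c \<le> ba" "0 \<le> u" "0 \<le> v" "u + v = 1"
    have "c = u * c + v * c" using h(5) by (metis distrib_right mult_1)
    also have "\<dots> \<le> u * b + v * ba" using h by (intro add_mono mult_left_mono) auto
    finally show "c \<le> u * b + v * ba" .
  qed
  have o1: "open (f ` lower c)" "open (f ` upper c)"
    by (auto intro!: openf open_Collect_less continuous_intros simp: lower_def upper_def)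
  have disj: "f ` lower c \<inter> f ` upper c = {}"
    by (auto simp: lower_def upper_def) (metis gf less_asym snd_conv)
  have cover: "U \<subseteq> f ` lower c \<union> f ` upper c"
  proof
    fix u assume u: "u \<in> U"
    have "snd (g u) \<noteq> c"
    proof
      assume "snd (g u) = c"
      then have "f (g u) \<in> lower c" using Lc by (auto simp: hline_def)
      then show False using u by (simp add: U_def lower_def)
    qed
    then have "g u \<in> lower c \<or> g u \<in> upper c" by (auto simp: lower_def upper_def)
    then show "u \<in> f ` lower c \<union> f ` upper c" by (metis Un_iff fg image_eqI)
  qed
  from connectedD[OF cU o1 _ cover] disj
  have cases: "f ` lower c \<inter> U = {} \<or> f ` upper c \<inter> U = {}" by blast
  show ?thesis
  proof (cases "f ` lower c \<inter> U = {}")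
    case True
    have "snd (f z) < c" if z: "snd z \<le> c" for z
    proof (cases "snd z = c")
      case True then show ?thesis using Lc by (auto simp: hline_def lower_def)
    next
      case False
      then have "z \<in> lower c" using z by (simp add: lower_def)
      then show ?thesis using True by (auto simp: U_def)
    qed
    then show ?thesis by blast
  next
    case False
    then have F: "f ` upper c \<inter> U = {}" using cases by blast
    have "snd (g u) < c" if u: "snd u \<ge> c" for u
    proof -
      have "u \<in> U" using u by (simp add: U_def)
      then have "u \<in> f ` lower c" using F cover by blast
      then show ?thesis by (auto simp: lower_def)
    qed
    then show ?thesis by blast
  qed
qed

lemma snd_f_le1: "snd z \<le> c1 \<Longrightarrow> snd (f z) < c1"
proof -
  have "\<not> (\<forall>u. snd u \<ge> c1 \<longrightarrow> snd (g u) < c1)"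
  proof
    assume A: "\<forall>u. snd u \<ge> c1 \<longrightarrow> snd (g u) < c1"
    obtain w where w: "w \<in> Theta f g (band c0 c1)" using Th by blast
    have "w \<in> band c0 c1" "ipow f g 1 w \<in> band c0 c1" using w by (auto simp: Theta_def)
    then have "snd (f w) \<ge> c1" "snd w \<ge> c1" using c01 by (auto simp: band_def ipow_def)
    then show False using A[rule_format, of "f w"] by simp
  qed
  then show "snd z \<le> c1 \<Longrightarrow> snd (f z) < c1" using dich[OF L1] by blast
qed

lemma band_iff: "z \<in> band c0 c1 \<longleftrightarrow> c1 \<le> snd z \<and> snd z \<le> c0"
  using c01 by (auto simp: band_def)

lemma snd_f_le0: "snd z \<le> c0 \<Longrightarrow> snd (f z) < c0"
proof -
  have "\<not> (\<forall>u. snd u \<ge> c0 \<longrightarrow> snd (g u) < c0)"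
  proof
    assume A: "\<forall>u. snd u \<ge> c0 \<longrightarrow> snd (g u) < c0"
    have hc: "continuous_on UNIV (\<lambda>z. snd (f z))" using contf by (intro continuous_intros) auto
    have hp: "snd (f (sh (real_of_int k) z)) = snd (f z)" for k z by (simp add: f_sh) (simp add: sh_def)
    obtain C where C: "\<forall>z \<in> band c0 c1. \<bar>snd (f z)\<bar> \<le> C"
      using periodic_bounded[OF hc hp] by blast
    define u where "u = (0::real, max c0 (C + 1))"
    have "snd (g u) < c0" using A by (simp add: u_def)
    moreover have "\<not> snd (g u) < c1"
    proof
      assume "snd (g u) < c1"
      then have "snd (f (g u)) < c1" using snd_f_le1[of "g u"] by simp
      then show False using c01 by (simp add: u_def)
    qed
    ultimately have "g u \<in> band c0 c1" by (simp add: band_iff)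
    then have "\<bar>snd (f (g u))\<bar> \<le> C" using C by blast
    then show False by (simp add: u_def)
  qed
  then show "snd z \<le> c0 \<Longrightarrow> snd (f z) < c0" using dich[OF L0] by blast
qed

lemma stepA:
  assumes z: "z \<in> band c0 c1" and zn: "(f ^^ n) z \<in> band c0 c1" and k: "k \<le> n"
  shows "(f ^^ k) z \<in> band c0 c1"
proof -
  have up: "snd ((f ^^ j) z) \<le> c0" for j
    by (induction j) (use z in \<open>auto simp: band_iff dest: snd_f_le0[THEN less_imp_le]\<close>)
  have low: "snd ((f ^^ (j + i)) z) < c1" if "snd ((f ^^ j) z) < c1" for i j
    by (induction i) (use that in \<open>auto dest!: snd_f_le1[OF less_imp_le]\<close>)
  have "snd ((f ^^ k) z) \<ge> c1"
  proof (rule ccontr)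
    assume "\<not> ?thesis"
    then have "snd ((f ^^ (k + (n - k))) z) < c1" by (intro low) auto
    then show False using zn k by (simp add: band_iff)
  qed
  then show ?thesis using up by (simp add: band_iff)
qed

lemma rot_bound: "\<exists>N\<ge>1. \<forall>w\<in>Theta f g (band c0 c1). fst ((f ^^ N) w) - fst w \<ge> 2"
proof (rule ccontr)
  define Th' where "Th' = Theta f g (band c0 c1)"
  define A where "A m = (\<Union>n\<in>{m..}.
      {ereal ((fst ((f ^^ n) z) - fst z) / real n) | z. z \<in> Th' \<and> (f ^^ n) z \<in> Th'})" for m :: nat
  assume neg: "\<not> ?thesis"
  have "\<forall>N. \<exists>w. w \<in> Th' \<and> fst ((f ^^ Suc N) w) - fst w < 2"
  proof
    fix N
    from neg have "\<not> (\<forall>w\<in>Th'. fst ((f ^^ Suc N) w) - fst w \<ge> 2)"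
      unfolding Th'_def using le_add1[of 1 N] by (metis plus_1_eq_Suc)
    then show "\<exists>w. w \<in> Th' \<and> fst ((f ^^ Suc N) w) - fst w < 2" by (meson not_le)
  qed
  then obtain W where W: "\<And>N. W N \<in> Th'" "\<And>N. fst ((f ^^ Suc N) (W N)) - fst (W N) < 2"
    by metis
  define y where "y N = ereal ((fst ((f ^^ Suc N) (W N)) - fst (W N)) / real (Suc N))" for N
  have yA: "y N \<in> A m" if "m \<le> Suc N" for m N
    using that W(1)[of N] Theta_inv[of "W N" "band c0 c1" "Suc N"]
    unfolding A_def y_def Th'_def by blast
  have ybd: "y N \<le> ereal (2 * inverse (real (Suc N)))" for N
  proof -
    have "(fst ((f ^^ Suc N) (W N)) - fst (W N)) / real (Suc N) \<le> 2 / real (Suc N)"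
      using W(2)[of N] by (intro divide_right_mono) auto
    then show ?thesis by (simp add: y_def divide_inverse)
  qed
  obtain r where r: "strict_mono r" "(y \<circ> r) \<longlonglongrightarrow> limsup y"
    using limsup_subseq_lim by blast
  have cl: "limsup y \<in> closure (A m)" for m

    proof (rule Lim_in_closed_set[OF closed_closure _ _ r(2)])
      show "\<forall>\<^sub>F x in sequentially. (y \<circ> r) x \<in> closure (A m)"
        unfolding eventually_sequentially
        using seq_suble[OF r(1)] yA closure_subset
        by (metis comp_apply le_SucI order_trans subsetD)
    qed simp
  have inrot: "limsup y \<in> rot_set f g Th'"
    unfolding rot_set_def
  proof (rule INT_I)
    fix m :: nat show "limsup y \<in> closure (\<Union>n\<in>{m..}.
      {ereal ((fst ((f ^^ n) z) - fst z) / real n) | z. z \<in> Th' \<and> (f ^^ n) z \<in> Th'})"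
      using cl[of m] unfolding A_def .
  qed
  have L1: "(\<lambda>j. ereal (2 * inverse (real (Suc j)))) \<longlonglongrightarrow> ereal (2 * 0)"
    by (intro tendsto_ereal tendsto_mult tendsto_const LIMSEQ_inverse_real_of_nat)
  have L2: "\<forall>\<^sub>F j in sequentially. (y \<circ> r) j \<le> ereal (2 * inverse (real (Suc j)))"
  proof (rule always_eventually, rule allI)
    fix j
    have "real (Suc j) \<le> real (Suc (r j))" using seq_suble[OF r(1), of j] by simp
    then have "2 * inverse (real (Suc (r j))) \<le> 2 * inverse (real (Suc j))"
      by (intro mult_left_mono le_imp_inverse_le) auto
    then show "(y \<circ> r) j \<le> ereal (2 * inverse (real (Suc j)))"
      using ybd[of "r j"] order_trans by (metis comp_apply ereal_less_eq(3))
  qed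
  have le0: "limsup y \<le> ereal (2 * 0)"
    by (rule tendsto_le[OF trivial_limit_sequentially L1 r(2) L2])
  have "limsup y \<in> {0<..<\<infinity>}" using inrot rot by (simp add: Th'_def subset_iff)
  then have "0 < limsup y" by simp
  with le0 show False by (simp add: zero_ereal_def[symmetric])
qed

lemma closed_band: "closed (band c0 c1)"
  unfolding band_def by (intro closed_Collect_conj closed_Collect_le continuous_intros)

lemma band_sh: "sh k z \<in> band c0 c1 \<longleftrightarrow> z \<in> band c0 c1"
  by (simp add: band_iff sh_def)

lemma compact_step:
  assumes N: "\<forall>w\<in>Theta f g (band c0 c1). fst ((f ^^ N) w) - fst w \<ge> 2"
  shows "\<exists>L. \<forall>v. (\<forall>k\<le>2*L. (f ^^ k) v \<in> band c0 c1) \<longrightarrow>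
           fst ((f ^^ N) ((f ^^ L) v)) - fst ((f ^^ L) v) \<ge> 1"
proof (rule ccontr)
  define D where "D z = fst ((f ^^ N) z) - fst z" for z
  have Dsh: "D (sh (real_of_int k) z) = D z" for k z by (simp add: D_def fpow_sh) (simp add: sh_def)
  have Dc: "continuous_on UNIV D" unfolding D_def
    by (intro continuous_intros cont_fpow)
  assume neg: "\<not> ?thesis"
  have "\<forall>L. \<exists>v. (\<forall>k\<le>2*L. (f ^^ k) v \<in> band c0 c1) \<and> D ((f ^^ L) v) < 1
          \<and> fst ((f ^^ L) v) \<in> {0..1}"
  proof
    fix L
    from neg obtain v where v: "\<forall>k\<le>2*L. (f ^^ k) v \<in> band c0 c1" "D ((f ^^ L) v) < 1"
      unfolding D_def by (meson not_le)
    define k where "k = - floor (fst ((f ^^ L) v))"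
    define v' where "v' = sh (real_of_int k) v"
    have "\<forall>j\<le>2*L. (f ^^ j) v' \<in> band c0 c1" using v(1) by (simp add: v'_def fpow_sh band_sh)
    moreover have "D ((f ^^ L) v') < 1" using v(2) by (simp add: v'_def fpow_sh Dsh)
    moreover have "fst ((f ^^ L) v') \<in> {0..1}"
      unfolding v'_def fpow_sh by (simp add: sh_def k_def) linarith
    ultimately show "\<exists>v. (\<forall>k\<le>2*L. (f ^^ k) v \<in> band c0 c1) \<and> D ((f ^^ L) v) < 1
          \<and> fst ((f ^^ L) v) \<in> {0..1}" by blast
  qed
  then obtain V where V: "\<And>L. \<forall>k\<le>2*L. (f ^^ k) (V L) \<in> band c0 c1"
    "\<And>L. D ((f ^^ L) (V L)) < 1" "\<And>L. fst ((f ^^ L) (V L)) \<in> {0..1}"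
    by metis
  define w where "w L = (f ^^ L) (V L)" for L
  define S where "S = {0..1::real} \<times> {c1..c0}"
  have "compact S" unfolding S_def by (intro compact_Times) auto
  then have sc: "seq_compact S" by (rule compact_imp_seq_compact)
  have wS: "\<forall>L. w L \<in> S"
  proof
    fix L
    have "w L \<in> band c0 c1" using V(1)[of L] by (simp add: w_def)
    then show "w L \<in> S" using V(3)[of L] by (auto simp: S_def w_def band_iff mem_Times_iff)
  qed
  obtain l r where lr: "l \<in> S" "strict_mono r" "(w \<circ> r) \<longlonglongrightarrow> l"
    using seq_compactE[OF sc wS] by metis
  have "ipow f g k l \<in> band c0 c1" for k
  proof (rule Lim_in_closed_set[OF closed_band])
    have "isCont (ipow f g k) l"
      using cont_ipow[of k] continuous_on_eq_continuous_at[OF open_UNIV] by blast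
    then show "(\<lambda>j. ipow f g k ((w \<circ> r) j)) \<longlonglongrightarrow> ipow f g k l"
      using lr(3) by (rule isCont_tendsto_compose)
    show "\<forall>\<^sub>F j in sequentially. ipow f g k ((w \<circ> r) j) \<in> band c0 c1"
      unfolding eventually_sequentially
    proof (intro exI allI impI)
      fix j assume j: "nat \<bar>k\<bar> \<le> j"
      have rj: "j \<le> r j" using seq_suble[OF lr(2)] by blast
      have e: "ipow f g k ((w \<circ> r) j) = ipow f g (k + int (r j)) (V (r j))"
        by (simp add: w_def ipow_fpow)
      have "k + int (r j) = int (nat (k + int (r j)))" "nat (k + int (r j)) \<le> 2 * r j"
        using j rj by auto
      then show "ipow f g k ((w \<circ> r) j) \<in> band c0 c1"
        using V(1)[of "r j"] e by (metis ipow_nat)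
    qed
  qed simp
  moreover have "l \<in> band c0 c1" using lr(1) by (auto simp: S_def band_iff mem_Times_iff)
  ultimately have "l \<in> Theta f g (band c0 c1)" by (simp add: Theta_def)
  then have D2: "D l \<ge> 2" using N by (simp add: D_def)
  have "isCont D l" using Dc continuous_on_eq_continuous_at[OF open_UNIV] by blast
  then have "(\<lambda>j. D ((w \<circ> r) j)) \<longlonglongrightarrow> D l" using lr(3) by (rule isCont_tendsto_compose)
  moreover have "\<forall>\<^sub>F j in sequentially. D ((w \<circ> r) j) \<le> 1"
    using V(2) by (simp add: w_def less_imp_le)
  ultimately have "D l \<le> 1" by (rule tendsto_upperbound) simp
  then show False using D2 by simp
qed

definition E :: "pt \<Rightarrow> nat \<Rightarrow> real" where
  "E z n = fst ((f ^^ n) z) - fst z"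

lemma E_add: "E z (a + b) = E z a + E ((f ^^ a) z) b"
proof -
  have "(f ^^ (a + b)) z = (f ^^ b) ((f ^^ a) z)"
    by (simp add: funpow_add add.commute[of a b])
  then show ?thesis by (simp add: E_def)
qed

lemma seg_bound:
  "\<exists>C\<ge>0. \<forall>j z. (\<forall>k<j. (f ^^ k) z \<in> band c0 c1) \<longrightarrow> \<bar>E z j\<bar> \<le> real j * C"
proof -
  have hc: "continuous_on UNIV (\<lambda>z. fst (f z) - fst z)" using contf by (intro continuous_intros) auto
  have hp: "fst (f (sh (real_of_int k) z)) - fst (sh (real_of_int k) z) = fst (f z) - fst z" for k z
    by (simp add: f_sh) (simp add: sh_def)
  obtain C where C: "\<forall>z \<in> band c0 c1. \<bar>fst (f z) - fst z\<bar> \<le> C"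
    using periodic_bounded[OF hc hp] by blast
  have "\<bar>E z j\<bar> \<le> real j * max C 0" if "\<forall>k<j. (f ^^ k) z \<in> band c0 c1" for j z
    using that
  proof (induction j)
    case 0 then show ?case by (simp add: E_def)
  next
    case (Suc j)
    have "E z (j + 1) = E z j + E ((f ^^ j) z) 1" by (rule E_add)
    moreover have "\<bar>E ((f ^^ j) z) 1\<bar> \<le> max C 0"
    proof -
      have "(f ^^ j) z \<in> band c0 c1" using Suc.prems by simp
      then have "\<bar>fst (f ((f ^^ j) z)) - fst ((f ^^ j) z)\<bar> \<le> C" using C by blast
      then show ?thesis by (simp add: E_def)
    qed
    moreover have "\<bar>E z j\<bar> \<le> real j * max C 0" using Suc by auto
    ultimately show ?case by (simp add: algebra_simps)
  qed
  then show ?thesis by (intro exI[of _ "max C 0"]) auto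
qed

lemma stepB: "\<exists>n0\<ge>1. \<forall>m\<ge>n0. \<forall>z. (\<forall>k\<le>m. (f ^^ k) z \<in> band c0 c1) \<longrightarrow> E z m > M"
proof -
  obtain N where N: "N \<ge> 1" "\<forall>w\<in>Theta f g (band c0 c1). fst ((f ^^ N) w) - fst w \<ge> 2"
    using rot_bound by blast
  obtain L where L: "\<And>v. (\<forall>k\<le>2*L. (f ^^ k) v \<in> band c0 c1) \<Longrightarrow> E ((f ^^ L) v) N \<ge> 1"
    using compact_step[OF N(2)] unfolding E_def by blast
  obtain C where C: "C \<ge> 0" "\<And>j z. (\<forall>k<j. (f ^^ k) z \<in> band c0 c1) \<Longrightarrow> \<bar>E z j\<bar> \<le> real j * C"
    using seg_bound by blast
  have Q: "E ((f ^^ L) z) (q * N) \<ge> real q" if "\<forall>k\<le>2*L + q*N. (f ^^ k) z \<in> band c0 c1" for q z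
    using that
  proof (induction q arbitrary: z)
    case 0 then show ?case by (simp add: E_def)
  next
    case (Suc q)
    have a: "E ((f ^^ L) z) N \<ge> 1" using Suc.prems by (intro L) auto
    have b: "\<forall>k\<le>2*L + q*N. (f ^^ k) ((f ^^ N) z) \<in> band c0 c1"
    proof (intro allI impI)
      fix k assume "k \<le> 2*L + q*N"
      then have "k + N \<le> 2*L + Suc q * N" by simp
      then have "(f ^^ (k + N)) z \<in> band c0 c1" using Suc.prems by blast
      then show "(f ^^ k) ((f ^^ N) z) \<in> band c0 c1" by (simp add: funpow_add)
    qed
    have c: "(f ^^ N) ((f ^^ L) z) = (f ^^ L) ((f ^^ N) z)"
      by (metis funpow_add comp_apply add.commute)
    have "E ((f ^^ L) z) (Suc q * N) = E ((f ^^ L) z) N + E ((f ^^ L) ((f ^^ N) z)) (q * N)"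
      using E_add[of "(f ^^ L) z" N "q * N"] c by simp
    then show ?case using a Suc.IH[OF b] by simp
  qed
  define K where "K = nat (ceiling (M + real (2*L + N) * C))"
  define n0 where "n0 = 2*L + N * (K + 2) + 1"
  show ?thesis
  proof (intro exI[of _ n0] conjI allI impI)
    show "1 \<le> n0" by (simp add: n0_def)
    fix m z assume m: "n0 \<le> m" and seg: "\<forall>k\<le>m. (f ^^ k) z \<in> band c0 c1"
    define q where "q = (m - 2*L) div N"
    define r where "r = (m - 2*L) mod N"
    have mq: "m = L + q * N + (L + r)"
    proof -
      have "q * N + r = m - 2*L" unfolding q_def r_def by (rule div_mult_mod_eq)
      moreover have "2*L \<le> m" using m by (simp add: n0_def)
      ultimately show ?thesis by linarith
    qed
    have rN: "r < N" using N(1) by (simp add: r_def)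
    have qK: "q \<ge> K + 2"
    proof -
      have "N * (K + 2) \<le> m - 2*L" using m by (simp add: n0_def)
      then have "N * (K + 2) div N \<le> q" unfolding q_def by (rule div_le_mono)
      then show ?thesis using N(1) by simp
    qed
    have e: "E z m = E z L + E ((f ^^ L) z) (q * N) + E ((f ^^ (L + q * N)) z) (L + r)"
      using E_add[of z L "q * N"] E_add[of z "L + q * N" "L + r"] mq by simp
    have s1: "\<bar>E z L\<bar> \<le> real L * C" using seg mq by (intro C(2)) auto
    have s2: "E ((f ^^ L) z) (q * N) \<ge> real q" using seg mq by (intro Q) auto
    have s3: "\<bar>E ((f ^^ (L + q * N)) z) (L + r)\<bar> \<le> real (L + r) * C"
    proof (intro C(2) allI impI)
      fix k assume "k < L + r"
      then have "(f ^^ (k + (L + q * N))) z \<in> band c0 c1" using seg mq by simp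
      then show "(f ^^ k) ((f ^^ (L + q * N)) z) \<in> band c0 c1" by (simp add: funpow_add)
    qed
    have "real (L + r) * C \<le> real (L + N) * C" using rN C(1) by (intro mult_right_mono) auto
    moreover have "real q \<ge> real K + 2" using qK by simp
    moreover have "real K \<ge> M + real (2*L + N) * C" unfolding K_def by linarith
    ultimately have "E z m \<ge> real q - real L * C - real (L + N) * C" using e s1 s2 s3 by linarith
    moreover have "real q - real L * C - real (L + N) * C \<ge> M + 2"
      using \<open>real q \<ge> real K + 2\<close> \<open>real K \<ge> M + real (2*L + N) * C\<close>
      by (simp add: algebra_simps)
    ultimately show "E z m > M" by linarith
  qed
qed

end

theorem lemma6p8:
  fixes f g :: "pt \<Rightarrow> pt" and c0 c1 c2 :: real
  assumes homeo: "homeomorphism UNIV UNIV f g"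
    and iso: "isotopic_to_id f"
    and commT: "\<And>x y. f (x + 1, y) = (fst (f (x, y)) + 1, snd (f (x, y)))"
    and H1a: "hline c0 \<subseteq> upper c1" and H1b: "hline c1 \<subseteq> upper c2"
    and H1c: "\<And>j. j \<in> {c0, c1, c2} \<Longrightarrow> f ` hline j \<subseteq> lower j"
    and H2: "\<And>n::nat. n \<ge> 1 \<Longrightarrow> (f ^^ n) ` hline c0 \<inter> hline c2 \<noteq> {}"
    and H3a: "Theta f g (band c0 c1) \<noteq> {}" and H3b: "Theta f g (band c1 c2) \<noteq> {}"
    and H3c: "rot_set f g (Theta f g (band c0 c1)) \<subseteq> {0<..<\<infinity>}"
    and H3d: "rot_set f g (Theta f g (band c1 c2)) \<subseteq> {-\<infinity><..<0}"
  shows "\<forall>M>0. \<exists>n0::nat. \<forall>K n. compact K \<and> K \<subseteq> band c0 c1 \<and> diameter (fst ` K) \<le> M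
           \<and> \<bar>n::int\<bar> \<ge> int n0 \<longrightarrow> ipow f g n ` K \<inter> K = {}"
proof -
  have c01: "c1 < c0"
  proof -
    have "(0, c0) \<in> hline c0" by (simp add: hline_def)
    then show ?thesis using H1a by (auto simp: upper_def)
  qed
  interpret S: setting f g c0 c1
    using homeo commT c01 H1c[of c0] H1c[of c1] H3a H3c by unfold_locales auto
  show ?thesis
  proof (intro allI impI)
    fix M :: real assume "M > 0"
    obtain n0 where n0: "n0 \<ge> 1" "\<And>m z. m \<ge> n0 \<Longrightarrow> (\<forall>k\<le>m. (f ^^ k) z \<in> band c0 c1) \<Longrightarrow> S.E z m > M"
      using S.stepB[of M] by blast
    have key: False if K: "compact K" "K \<subseteq> band c0 c1" "diameter (fst ` K) \<le> M"
      and m: "m \<ge> n0" and w: "w \<in> K" and z: "(f ^^ m) w \<in> K" for K m w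
    proof -
      have "\<forall>k\<le>m. (f ^^ k) w \<in> band c0 c1"
        using S.stepA[of w m] K(2) w z by auto
      then have E: "S.E w m > M" using n0(2) m by blast
      have "bounded (fst ` K)" using K(1) by (intro bounded_fst compact_imp_bounded)
      then have "dist (fst ((f ^^ m) w)) (fst w) \<le> diameter (fst ` K)"
        using w z by (intro diameter_bounded_bound) auto
      then show False using E K(3) by (simp add: S.E_def dist_real_def)
    qed
    show "\<exists>n0::nat. \<forall>K n. compact K \<and> K \<subseteq> band c0 c1 \<and> diameter (fst ` K) \<le> M
           \<and> \<bar>n::int\<bar> \<ge> int n0 \<longrightarrow> ipow f g n ` K \<inter> K = {}"
    proof (intro exI[of _ n0] allI impI)
      fix K and n :: int
      assume A: "compact K \<and> K \<subseteq> band c0 c1 \<and> diameter (fst ` K) \<le> M \<and> \<bar>n\<bar> \<ge> int n0"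
      show "ipow f g n ` K \<inter> K = {}"
      proof (rule ccontr)
        assume "ipow f g n ` K \<inter> K \<noteq> {}"
        then obtain z where z: "z \<in> K" "ipow f g n z \<in> K" by blast
        show False
        proof (cases "n \<ge> 0")
          case True
          then have "ipow f g n z = (f ^^ nat n) z" by (simp add: ipow_def)
          moreover have "nat n \<ge> n0" using A True by linarith
          ultimately show False using key[of K "nat n" z] A z by auto
        next
          case False
          then have "ipow f g n z = (g ^^ nat (-n)) z" by (simp add: ipow_def)
          moreover have "nat (-n) \<ge> n0" using A False by linarith
          moreover have "(f ^^ nat (-n)) ((g ^^ nat (-n)) z) = z" by (rule S.fg_pow)
          ultimately show False using key[of K "nat (-n)" "(g ^^ nat (-n)) z"] A z by auto
        qed
      qed
    qed
  qed
qed

end
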